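(* Let $n\ge2$ be an integer that is not a perfect square, and let $a,b$ be positive rational numbers with $a^2-nb^2=1$. Put $u=a+b\sqrt n$ and for $k\ge1$ write $u^k=a_k+b_k\sqrt n$ with $a_k,b_k\in\mathbb Q$. Then $$\mathcal L\left(\frac1{u^2}\right)=\sum_{k=2}^{\infty}\mathcal L\left(\frac{1}{(b_k/b)^2}\right).$$ Moreover, if $a,b\in\mathbb Z$ then $b_k/b\in\mathbb Z$ for all $k\ge1$.
   Context: $\mathcal L$ is the Rogers dilogarithm: for real $z\le1$, $\mathcal L(z)=\mathrm{Li}_2(z)+\tfrac12\log|z|\log(1-z)$, where $\mathrm{Li}_2(z)=\sum_{m\ge1}z^m/m^2$. *)

theory Defs
  imports "HOL-Analysis.Analysis"
begin

definition Li2 :: "real \<Rightarrow> real" where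
  "Li2 z = (\<Sum>m. z ^ (Suc m) / (real (Suc m))^2)"

definition rogersL :: "real \<Rightarrow> real" where
  "rogersL z = Li2 z + 1/2 * ln \<bar>z\<bar> * ln (1 - z)"

end

theory Submission imports Defs "HOL-Real_Asymp.Real_Asymp" begin


lemma summable_invsq: "summable (\<lambda>m. 1 / (real (Suc m))^2)"
proof -
  have "summable (\<lambda>n. inverse (real n ^ 2))"
    by (rule inverse_power_summable) simp
  then have "summable (\<lambda>n. inverse (real (Suc n) ^ 2))"
    by (subst summable_Suc_iff)
  then show ?thesis by (simp only: divide_inverse mult_1)
qed
lemma Li2_cont: "continuous_on {-1..1} Li2"
proof -
  have ul: "uniform_limit {-1..1} (\<lambda>n z. \<Sum>i<n. z ^ Suc i / (real (Suc i))^2)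
      (\<lambda>z. suminf (\<lambda>i. z ^ Suc i / (real (Suc i))^2)) sequentially"
  proof (rule Weierstrass_m_test[OF _ summable_invsq])
    fix n and z :: real assume "z \<in> {-1..1}"
    then have "\<bar>z\<bar> ^ Suc n \<le> 1" by (intro power_le_one) auto
    then show "norm (z ^ Suc n / (real (Suc n))^2) \<le> 1 / (real (Suc n))^2"
      by (simp add: abs_mult power_abs divide_right_mono)
  qed
  have "continuous_on {-1..1} (\<lambda>z. suminf (\<lambda>i. z ^ Suc i / (real (Suc i))^2))"
    by (rule uniform_limit_theorem[OF _ ul]) (auto intro!: always_eventually continuous_intros)
  then show ?thesis unfolding Li2_def[abs_def] .
qed


lemma log_series:
  fixes z :: real assumes "\<bar>z\<bar> < 1"
  shows "(\<lambda>n. z ^ Suc n / real (Suc n)) sums (- ln (1 - z))"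
proof -
  have sm: "summable (\<lambda>n. z ^ Suc n / real (Suc n))"
  proof (rule summable_comparison_test[of _ "\<lambda>n. \<bar>z\<bar> ^ Suc n"])
    show "\<exists>N. \<forall>n\<ge>N. norm (z ^ Suc n / real (Suc n)) \<le> \<bar>z\<bar> ^ Suc n"
    proof (intro exI allI impI)
      fix n :: nat
      have "norm (z ^ Suc n / real (Suc n)) = \<bar>z\<bar> ^ Suc n / real (Suc n)"
        by (simp add: power_abs abs_mult)
      also have "\<dots> \<le> \<bar>z\<bar> ^ Suc n / 1"
        by (rule divide_left_mono) auto
      also have "\<dots> = \<bar>z\<bar> ^ Suc n" by simp
      finally show "norm (z ^ Suc n / real (Suc n)) \<le> \<bar>z\<bar> ^ Suc n" .
    qed
    show "summable (\<lambda>n. \<bar>z\<bar> ^ Suc n)" using assms by (simp add: summable_geometric)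
  qed
  have "ln (1 - z) = (\<Sum>n. (-1)^n * (1 / real (n + 1)) * ((1 - z) - 1)^(Suc n))"
    using assms by (intro ln_series) auto
  also have "\<dots> = (\<Sum>n. - (z ^ Suc n / real (Suc n)))"
  proof (rule suminf_cong)
    fix n
    have "((1 - z) - 1)^(Suc n) = (-z)^Suc n" by simp
    also have "\<dots> = (-1)^Suc n * z ^ Suc n" by (rule power_minus)
    finally have e: "((1 - z) - 1)^(Suc n) = (-1)^Suc n * z ^ Suc n" .
    have "(-1::real)^n * (-1)^Suc n = -1"
      by (simp add: power_Suc flip: power_add)
    then show "(-1)^n * (1 / real (n + 1)) * ((1 - z) - 1)^(Suc n) = - (z ^ Suc n / real (Suc n))"
      unfolding e by (simp add: field_simps)
  qed
  also have "\<dots> = - (\<Sum>n. z ^ Suc n / real (Suc n))" using suminf_minus[OF sm] .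
  finally show ?thesis using sm by (simp add: sums_iff)
qed

lemma Li2_sums: "\<bar>w\<bar> \<le> 1 \<Longrightarrow> (\<lambda>m. w ^ Suc m / (real (Suc m))^2) sums Li2 w"
proof -
  assume w: "\<bar>w\<bar> \<le> 1"
  have "summable (\<lambda>m. w ^ Suc m / (real (Suc m))^2)"
  proof (rule summable_comparison_test[OF _ summable_invsq])
    show "\<exists>N. \<forall>n\<ge>N. norm (w ^ Suc n / (real (Suc n))^2) \<le> 1 / (real (Suc n))^2"
    proof (intro exI allI impI)
      fix n :: nat
      have "\<bar>w\<bar> ^ Suc n \<le> 1" using w by (intro power_le_one) auto
      then show "norm (w ^ Suc n / (real (Suc n))^2) \<le> 1 / (real (Suc n))^2"
        by (simp add: abs_mult power_abs divide_right_mono)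
    qed
  qed
  then show ?thesis unfolding Li2_def by (simp add: summable_sums)
qed

definition cLi :: "nat \<Rightarrow> real" where "cLi n = (if n = 0 then 0 else 1 / (real n)^2)"

lemma Li2_powser: "\<bar>w\<bar> \<le> 1 \<Longrightarrow> (\<lambda>n. cLi n * w ^ n) sums Li2 w"
proof -
  assume w: "\<bar>w\<bar> \<le> 1"
  have "(\<lambda>n. cLi (Suc n) * w ^ (Suc n)) sums Li2 w"
    using Li2_sums[OF w] by (simp add: cLi_def)
  then have "(\<lambda>n. cLi n * w ^ n) sums (Li2 w + cLi 0 * w ^ 0)"
    by (subst (asm) sums_Suc_iff)
  then show ?thesis by (simp add: cLi_def)
qed

lemma Li2_deriv:
  fixes z :: real assumes "\<bar>z\<bar> < 1" "z \<noteq> 0"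
  shows "(Li2 has_real_derivative (- ln (1 - z) / z)) (at z)"
proof -
  have d: "((\<lambda>w. \<Sum>n. cLi n * w ^ n) has_field_derivative (\<Sum>n. diffs cLi n * z ^ n)) (at z)"
  proof (rule termdiffs_strong'[where K = 1])
    fix w :: real assume "norm w < 1"
    then show "summable (\<lambda>n. cLi n * w ^ n)" using Li2_powser[of w] sums_summable by auto
  qed (use assms in auto)
  have "(\<lambda>n. z ^ Suc n / real (Suc n) / z) sums (- ln (1 - z) / z)"
    using log_series[OF assms(1)] by (rule sums_divide)
  moreover have "\<And>n. z ^ Suc n / real (Suc n) / z = diffs cLi n * z ^ n"
  proof -
    fix n
    have "diffs cLi n = 1 / real (Suc n)"
      unfolding diffs_def cLi_def by (simp add: power2_eq_square del: of_nat_Suc)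
    then show "z ^ Suc n / real (Suc n) / z = diffs cLi n * z ^ n"
      using assms(2) by simp
  qed
  ultimately have "(\<lambda>n. diffs cLi n * z ^ n) sums (- ln (1 - z) / z)" by simp
  then have "(\<Sum>n. diffs cLi n * z ^ n) = - ln (1 - z) / z" by (rule sums_unique[symmetric])
  with d have d2: "((\<lambda>w. \<Sum>n. cLi n * w ^ n) has_field_derivative (- ln (1 - z) / z)) (at z)" by simp
  show ?thesis
  proof (rule has_field_derivative_transform_within_open[OF d2, of "ball 0 1"])
    show "z \<in> ball 0 1" using assms by simp
    fix w :: real assume "w \<in> ball 0 1"
    then have "(\<lambda>n. cLi n * w ^ n) sums Li2 w" using Li2_powser[of w] by auto
    then show "(\<Sum>n. cLi n * w ^ n) = Li2 w" by (simp add: sums_iff)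
  qed auto
qed

definition DL :: "real \<Rightarrow> real" where "DL z = - (ln (1 - z) / z + ln z / (1 - z)) / 2"

lemma rogersL_deriv:
  fixes z :: real assumes "0 < z" "z < 1"
  shows "(rogersL has_real_derivative DL z) (at z)"
proof -
  have d: "((\<lambda>w. Li2 w + 1/2 * ln w * ln (1 - w)) has_real_derivative
     (- ln (1 - z) / z + 1/2 * ((1 / z) * ln (1 - z) + ln z * (- 1 / (1 - z))))) (at z)"
    using assms
    by (auto intro!: derivative_eq_intros Li2_deriv simp: field_simps)
  have e: "- ln (1 - z) / z + 1/2 * ((1 / z) * ln (1 - z) + ln z * (- 1 / (1 - z))) = DL z"
    using assms by (simp add: DL_def field_simps)
  show ?thesis
  proof (rule has_field_derivative_transform_within_open[OF d[unfolded e], of "{0<..<1}"])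
    fix w :: real assume "w \<in> {0<..<1}"
    then show "Li2 w + 1/2 * ln w * ln (1 - w) = rogersL w" by (simp add: rogersL_def)
  qed (use assms in auto)
qed

lemma rogersL_0 [simp]: "rogersL 0 = 0"
  by (simp add: rogersL_def Li2_def)

lemma logprod_cont: "continuous_on {0..1} (\<lambda>z::real. ln \<bar>z\<bar> * ln (1 - z))"
proof (rule continuous_on_eq_continuous_within[THEN iffD2], intro ballI)
  fix z :: real assume z: "z \<in> {0..1}"
  consider "z = 0" | "z = 1" | "0 < z \<and> z < 1" using z by fastforce
  then show "continuous (at z within {0..1}) (\<lambda>z::real. ln \<bar>z\<bar> * ln (1 - z))"
  proof cases
    case 1
    have "((\<lambda>z::real. ln z * ln (1 - z)) \<longlongrightarrow> 0) (at_right 0)" by real_asymp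
    then have "((\<lambda>z::real. ln \<bar>z\<bar> * ln (1 - z)) \<longlongrightarrow> 0) (at_right 0)"
      by (rule Lim_transform_eventually) (auto intro: eventually_mono[OF eventually_at_right_less])
    then have "((\<lambda>z::real. ln \<bar>z\<bar> * ln (1 - z)) \<longlongrightarrow> 0) (at 0 within {0..})"
      by (simp add: at_within_Ici_at_right)
    then have "((\<lambda>z::real. ln \<bar>z\<bar> * ln (1 - z)) \<longlongrightarrow> 0) (at 0 within {0..1})"
      by (rule tendsto_within_subset) auto
    then show ?thesis using 1 by (simp add: continuous_within)
  next
    case 2
    have "((\<lambda>z::real. ln z * ln (1 - z)) \<longlongrightarrow> 0) (at_left 1)" by real_asymp
    then have "((\<lambda>z::real. ln \<bar>z\<bar> * ln (1 - z)) \<longlongrightarrow> 0) (at_left 1)"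
      by (rule Lim_transform_eventually) (rule eventually_mono[OF eventually_at_left_real[of 0 1]], auto)
    then have "((\<lambda>z::real. ln \<bar>z\<bar> * ln (1 - z)) \<longlongrightarrow> 0) (at 1 within {..1})"
      by (simp add: at_within_Iic_at_left)
    then have "((\<lambda>z::real. ln \<bar>z\<bar> * ln (1 - z)) \<longlongrightarrow> 0) (at 1 within {0..1})"
      by (rule tendsto_within_subset) auto
    then show ?thesis using 2 by (simp add: continuous_within)
  next
    case 3
    then have "continuous (at z) (\<lambda>z::real. ln \<bar>z\<bar> * ln (1 - z))"
      by (auto intro!: continuous_intros)
    then show ?thesis by (rule continuous_at_imp_continuous_within)
  qed
qed

lemma rogersL_cont: "continuous_on {0..1} rogersL"
proof -
  have "continuous_on {0..1} Li2" by (rule continuous_on_subset[OF Li2_cont]) auto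
  then have "continuous_on {0..1} (\<lambda>z. Li2 z + 1/2 * (ln \<bar>z\<bar> * ln (1 - z)))"
    by (intro continuous_intros logprod_cont)
  then show ?thesis unfolding rogersL_def[abs_def] by (simp add: mult.assoc)
qed

lemma five_alg:
  fixes t y a b c d e :: real
  assumes "0 < t" "t < 1" "0 < y" "y < 1"
  defines "X \<equiv> t * (1 - y) / (1 - t * y)" and "Y \<equiv> y * (1 - t) / (1 - t * y)"
  shows "(c / t + a / (1 - t)) - y * (e / (t * y) + (a + b) / (1 - t * y))
     - (1 - y) / (1 - t * y)^2 * ((c - e) / X + (a + d - e) / (1 - X))
     - (- y * (1 - y) / (1 - t * y)^2) * ((d - e) / Y + (b + c - e) / (1 - Y)) = 0"
proof -
  have "t * y < t * 1" using assms by (intro mult_strict_left_mono) auto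
  then have ty: "t * y < 1" using assms by linarith
  define s where "s = 1 - t * y"
  have s0: "s \<noteq> 0" "s > 0" using ty by (auto simp: s_def)
  have t0: "t \<noteq> 0" "1 - t \<noteq> 0" "y \<noteq> 0" "1 - y \<noteq> 0" using assms by auto
  have X: "X = t * (1 - y) / s" and Y: "Y = y * (1 - t) / s" by (simp_all add: X_def Y_def s_def)
  have X1: "1 - X = (1 - t) / s" unfolding X s_def using s0 by (simp add: s_def field_simps)
  have Y1: "1 - Y = (1 - y) / s" unfolding Y s_def using s0 by (simp add: s_def field_simps)
  have p1: "(1 - y) / s^2 * ((c - e) / X) = (c - e) / (t * s)"
    unfolding X using s0 t0 by (simp add: field_simps power2_eq_square)
  have p2: "(1 - y) / s^2 * ((a + d - e) / (1 - X)) = (a + d - e) * (1 - y) / ((1 - t) * s)"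
    unfolding X1 using s0 t0 by (simp add: field_simps power2_eq_square)
  have p3: "(- y * (1 - y) / s^2) * ((d - e) / Y) = - ((d - e) * (1 - y) / ((1 - t) * s))"
    unfolding Y using s0 t0 by (simp add: field_simps power2_eq_square)
  have p4: "(- y * (1 - y) / s^2) * ((b + c - e) / (1 - Y)) = - (y * (b + c - e) / s)"
    unfolding Y1 using s0 t0 by (simp add: field_simps power2_eq_square)
  have "(c / t + a / (1 - t)) - y * (e / (t * y) + (a + b) / s)
     - (1 - y) / s^2 * ((c - e) / X + (a + d - e) / (1 - X))
     - (- y * (1 - y) / s^2) * ((d - e) / Y + (b + c - e) / (1 - Y))
     = (c / t + a / (1 - t)) - (e / t + y * (a + b) / s)
     - ((c - e) / (t * s) + (a + d - e) * (1 - y) / ((1 - t) * s))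
     - (- ((d - e) * (1 - y) / ((1 - t) * s)) - (y * (b + c - e) / s))"
    using t0 by (simp only: distrib_left p1 p2 p3 p4) (simp add: field_simps)
  also have "\<dots> = 0"
  proof -
    define r where "r = 1 - t"
    have r0: "r \<noteq> 0" using t0 by (simp add: r_def)
    have "(c / t + a / r) - (e / t + y * (a + b) / s)
     - ((c - e) / (t * s) + (a + d - e) * (1 - y) / (r * s))
     - (- ((d - e) * (1 - y) / (r * s)) - (y * (b + c - e) / s))
      = (c * r * s + a * t * s - e * r * s - y * (a + b) * t * r - (c - e) * r
         - (a + d - e) * (1 - y) * t + (d - e) * (1 - y) * t + y * (b + c - e) * t * r) / (t * r * s)"
      using r0 s0 t0 by (simp add: field_simps)
    also have "\<dots> = 0" by (simp add: r_def s_def algebra_simps)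
    finally show ?thesis by (simp add: r_def)
  qed
  finally show ?thesis by (simp add: s_def)
qed

lemma zero_deriv_within:
  "(f has_real_derivative 0) (at x) \<Longrightarrow> (f has_derivative (\<lambda>h. 0)) (at x within S)"
proof -
  assume "(f has_real_derivative 0) (at x)"
  then have "(f has_derivative ((*) 0)) (at x)" by (simp add: has_field_derivative_def)
  moreover have "((*) 0) = (\<lambda>h::real. 0)" by (rule ext) simp
  ultimately have "(f has_derivative (\<lambda>h. 0)) (at x)" by simp
  then show ?thesis by (rule has_derivative_at_withinI)
qed

lemma rogersL_refl:
  assumes "0 \<le> z" "z \<le> 1"
  shows "rogersL z + rogersL (1 - z) = rogersL 1"
proof (rule has_derivative_zero_unique_strong_interval[where k="{0,1}" and a=0 and b=1
        and f="\<lambda>z. rogersL z + rogersL (1 - z)"])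
  have "continuous_on {0..1} (\<lambda>z. rogersL (1 - z))"
    by (rule continuous_on_compose2[OF rogersL_cont]) (auto intro!: continuous_intros)
  then show "continuous_on {0..1} (\<lambda>z. rogersL z + rogersL (1 - z))"
    by (intro continuous_on_add rogersL_cont)
  fix x :: real assume x: "x \<in> {0..1} - {0, 1}"
  then have x01: "0 < x" "x < 1" by auto
  have d1: "((\<lambda>z. 1 - z) has_real_derivative (-1)) (at x)" by (auto intro!: derivative_eq_intros)
  have "((\<lambda>z. rogersL z + rogersL (1 - z)) has_real_derivative (DL x + DL (1 - x) * (-1))) (at x)"
    using x01 by (intro DERIV_add rogersL_deriv DERIV_chain2[OF rogersL_deriv d1]) auto
  moreover have "DL x + DL (1 - x) * (-1) = 0" by (simp add: DL_def)
  ultimately show "((\<lambda>z. rogersL z + rogersL (1 - z)) has_derivative (\<lambda>h. 0)) (at x within {0..1})"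
    by (intro zero_deriv_within) simp
qed (use assms in auto)

lemma ty_lt1: "(0::real) \<le> t \<Longrightarrow> t \<le> 1 \<Longrightarrow> 0 \<le> y \<Longrightarrow> y < 1 \<Longrightarrow> t * y < 1"
proof -
  assume a: "0 \<le> t" "t \<le> 1" "0 \<le> y" "y < 1"
  have "t * y \<le> 1 * y" using a by (intro mult_right_mono) auto
  then show ?thesis using a by simp
qed

lemma five_term:
  fixes x y :: real
  assumes x: "0 < x" "x < 1" and y: "0 < y" "y < 1"
  shows "rogersL x + rogersL y = rogersL (x * y) + rogersL (x * (1 - y) / (1 - x * y))
           + rogersL (y * (1 - x) / (1 - x * y))"
proof -
  define G where "G t = rogersL t + rogersL y - rogersL (t * y) - rogersL (t * (1 - y) / (1 - t * y))
           - rogersL (y * (1 - t) / (1 - t * y))" for t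
  have sp: "1 - t * y > 0" if "0 \<le> t" "t \<le> 1" for t using ty_lt1[OF that] y by simp
  have "G x = 0"
  proof (rule has_derivative_zero_unique_strong_interval[where k="{0,x}" and a=0 and b=x and f=G])
    have S: "\<And>t. t \<in> {0..x} \<Longrightarrow> 0 \<le> t \<and> t \<le> 1" using x by auto
    have c1: "continuous_on {0..x} (\<lambda>t. rogersL (t * y))"
    proof (rule continuous_on_compose2[OF rogersL_cont])
      show "(\<lambda>t. t * y) ` {0..x} \<subseteq> {0..1}"
      proof
        fix z assume "z \<in> (\<lambda>t. t * y) ` {0..x}"
        then obtain t where t: "t \<in> {0..x}" "z = t * y" by auto
        then show "z \<in> {0..1}" using ty_lt1[of t y] S[OF t(1)] y by auto
      qed
    qed (auto intro!: continuous_intros)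
    have c2: "continuous_on {0..x} (\<lambda>t. rogersL (t * (1 - y) / (1 - t * y)))"
    proof (rule continuous_on_compose2[OF rogersL_cont])
      show "continuous_on {0..x} (\<lambda>t. t * (1 - y) / (1 - t * y))"
        using sp S by (intro continuous_intros) (metis less_irrefl)
      show "(\<lambda>t. t * (1 - y) / (1 - t * y)) ` {0..x} \<subseteq> {0..1}"
      proof
        fix z assume "z \<in> (\<lambda>t. t * (1 - y) / (1 - t * y)) ` {0..x}"
        then obtain t where t: "t \<in> {0..x}" "z = t * (1 - y) / (1 - t * y)" by auto
        have p: "1 - t * y > 0" using sp S[OF t(1)] by auto
        have "t * (1 - y) \<le> 1 - t * y" using S[OF t(1)] by (simp add: algebra_simps)
        then show "z \<in> {0..1}" using t p S[OF t(1)] y by (auto simp: divide_le_eq_1)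
      qed
    qed
    have c3: "continuous_on {0..x} (\<lambda>t. rogersL (y * (1 - t) / (1 - t * y)))"
    proof (rule continuous_on_compose2[OF rogersL_cont])
      show "continuous_on {0..x} (\<lambda>t. y * (1 - t) / (1 - t * y))"
        using sp S by (intro continuous_intros) (metis less_irrefl)
      show "(\<lambda>t. y * (1 - t) / (1 - t * y)) ` {0..x} \<subseteq> {0..1}"
      proof
        fix z assume "z \<in> (\<lambda>t. y * (1 - t) / (1 - t * y)) ` {0..x}"
        then obtain t where t: "t \<in> {0..x}" "z = y * (1 - t) / (1 - t * y)" by auto
        have p: "1 - t * y > 0" using sp S[OF t(1)] by auto
        have "y * (1 - t) \<le> 1 - t * y" using y by (simp add: algebra_simps)
        then show "z \<in> {0..1}" using t p S[OF t(1)] y by (auto simp: divide_le_eq_1)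
      qed
    qed
    have c0: "continuous_on {0..x} rogersL" by (rule continuous_on_subset[OF rogersL_cont]) (use x in auto)
    show "continuous_on {0..x} G" unfolding G_def[abs_def]
      by (intro continuous_on_diff continuous_on_add c0 c1 c2 c3 continuous_on_const)
    show "G 0 = 0" by (simp add: G_def)
    fix t assume t: "t \<in> {0..x} - {0, x}"
    then have t01: "0 < t" "t < 1" using x by auto
    define s where "s = 1 - t * y"
    have s: "s > 0" "s < 1" using sp[of t] t01 y by (auto simp: s_def)
    define X where "X = t * (1 - y) / s"
    define Y where "Y = y * (1 - t) / s"
    have X1: "1 - X = (1 - t) / s" unfolding X_def using s by (simp add: s_def field_simps)
    have Y1: "1 - Y = (1 - y) / s" unfolding Y_def using s by (simp add: s_def field_simps)
    have "(1 - t) / s > 0" "(1 - y) / s > 0" using s t01 y by auto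
    then have "X < 1" "Y < 1" using X1 Y1 by linarith+
    moreover have "0 < X" "0 < Y" using s t01 y by (auto simp: X_def Y_def)
    ultimately have X01: "0 < X" "X < 1" and Y01: "0 < Y" "Y < 1" by auto
    have ty01: "0 < t * y" "t * y < 1" using s t01 y by (auto simp: s_def)
    have dP: "((\<lambda>t. t * y) has_real_derivative y) (at t)" by (auto intro!: derivative_eq_intros)
    have dX: "((\<lambda>t. t * (1 - y) / (1 - t * y)) has_real_derivative ((1 - y) / s^2)) (at t)"
      using s by (auto intro!: derivative_eq_intros simp: s_def field_simps power2_eq_square)
    have dY: "((\<lambda>t. y * (1 - t) / (1 - t * y)) has_real_derivative (- y * (1 - y) / s^2)) (at t)"
      using s by (auto intro!: derivative_eq_intros simp: s_def field_simps power2_eq_square)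
    have dG: "(G has_real_derivative
       (DL t + 0 - DL (t * y) * y - DL X * ((1 - y) / s^2) - DL Y * (- y * (1 - y) / s^2))) (at t)"
      unfolding G_def[abs_def] X_def Y_def s_def
      using t01 ty01 X01 Y01
      by (intro DERIV_diff DERIV_add rogersL_deriv DERIV_const
            DERIV_chain2[OF rogersL_deriv dP] DERIV_chain2[OF rogersL_deriv dX[unfolded s_def]]
            DERIV_chain2[OF rogersL_deriv dY[unfolded s_def]]) (auto simp: X_def Y_def s_def)
    have l1: "ln (t * y) = ln t + ln y" using t01 y by (simp add: ln_mult)
    have l2: "ln X = ln t + ln (1 - y) - ln s" using t01 y s by (simp add: X_def ln_mult ln_div)
    have l3: "ln (1 - X) = ln (1 - t) - ln s" using t01 y s by (simp add: X1 ln_div)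
    have l4: "ln Y = ln y + ln (1 - t) - ln s" using t01 y s by (simp add: Y_def ln_mult ln_div)
    have l5: "ln (1 - Y) = ln (1 - y) - ln s" using t01 y s by (simp add: Y1 ln_div)
    have e0: "DL t = - (ln (1 - t) / t + ln t / (1 - t)) / 2" by (simp only: DL_def)
    have e1: "DL (t * y) = - (ln s / (t * y) + (ln t + ln y) / (1 - t * y)) / 2"
      by (simp only: DL_def l1 s_def)
    have e2: "DL X = - ((ln (1 - t) - ln s) / X + (ln t + ln (1 - y) - ln s) / (1 - X)) / 2"
      by (simp only: DL_def l2 l3)
    have e3: "DL Y = - ((ln (1 - y) - ln s) / Y + (ln y + ln (1 - t) - ln s) / (1 - Y)) / 2"
      by (simp only: DL_def l4 l5)
    have lin: "\<And>A1 A2 A3 A4 k1 k2 yy :: real. (- A1 / 2) + 0 - (- A2 / 2) * yy - (- A3 / 2) * k1 - (- A4 / 2) * k2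
        = - (A1 - yy * A2 - k1 * A3 - k2 * A4) / 2" by (simp add: algebra_simps)
    have fa: "(ln (1 - t) / t + ln t / (1 - t)) - y * (ln s / (t * y) + (ln t + ln y) / (1 - t * y))
     - (1 - y) / s^2 * ((ln (1 - t) - ln s) / X + (ln t + ln (1 - y) - ln s) / (1 - X))
     - (- y * (1 - y) / s^2) * ((ln (1 - y) - ln s) / Y + (ln y + ln (1 - t) - ln s) / (1 - Y)) = 0"
      using five_alg[OF t01 y, where a="ln t" and b="ln y" and c="ln (1 - t)" and d="ln (1 - y)" and e="ln s"]
      unfolding s_def[symmetric] X_def[symmetric] Y_def[symmetric] .
    have "DL t + 0 - DL (t * y) * y - DL X * ((1 - y) / s^2) - DL Y * (- y * (1 - y) / s^2) = 0"
      unfolding e0 e1 e2 e3 lin fa by simp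
    then have "(G has_real_derivative 0) (at t)" using dG by simp
    then show "(G has_derivative (\<lambda>h. 0)) (at t within {0..x})" by (rule zero_deriv_within)
  qed (use x in auto)
  then show ?thesis by (simp add: G_def)
qed

lemma step_alg:
  fixes p q :: real
  assumes q: "0 < q" "q < 1" and p: "0 < p" "p < 1"
  defines "x \<equiv> p * (1 - q) / (1 - p * q)" and "y \<equiv> (1 - q) / (1 - p * q)"
  shows "x * (1 - y) / (1 - x * y) = p * q * (1 - q) / (1 - p * q * q)"
    and "y * (1 - x) / (1 - x * y) = (1 - q) / (1 - p * q * q)"
proof -
  have pq: "p * q < 1" "p * q * q < 1" using ty_lt1[of p q] ty_lt1[of "p*q" q] p q by auto
  define u where "u = 1 - p * q"
  define w where "w = 1 - p * q * q"
  define r where "r = 1 - p"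
  have u0: "u \<noteq> 0" and w0: "w \<noteq> 0" and r0: "r \<noteq> 0" using pq p by (auto simp: u_def w_def r_def)
  have q0: "1 - q \<noteq> 0" "q \<noteq> 0" using q by auto
  have y1: "1 - y = q * r / u" unfolding y_def u_def[symmetric] using u0
    by (simp add: field_simps u_def r_def)
  have x1: "1 - x = r / u" unfolding x_def u_def[symmetric] using u0
    by (simp add: field_simps u_def r_def)
  have xy0: "x * y = p * (1 - q)^2 / u^2" unfolding x_def y_def u_def[symmetric]
    by (simp add: power2_eq_square)
  have xy1: "1 - x * y = (u^2 - p * (1 - q)^2) / u^2" unfolding xy0 using u0 by (simp add: field_simps)
  have "u^2 - p * (1 - q)^2 = r * w" by (simp add: u_def r_def w_def power2_eq_square algebra_simps)
  then have xy: "1 - x * y = r * w / u^2" using xy1 by simp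
  show "x * (1 - y) / (1 - x * y) = p * q * (1 - q) / (1 - p * q * q)"
    unfolding y1 xy w_def[symmetric] unfolding x_def u_def[symmetric]
    using u0 w0 r0 by (simp add: field_simps power2_eq_square)
  show "y * (1 - x) / (1 - x * y) = (1 - q) / (1 - p * q * q)"
    unfolding x1 xy w_def[symmetric] unfolding y_def u_def[symmetric]
    using u0 w0 r0 by (simp add: field_simps power2_eq_square)
qed

lemma tele:
  fixes q :: real assumes q: "0 < q" "q < 1"
  shows "(\<lambda>j. rogersL ((q^(j+1) * (1 - q) / (1 - q^(j+2))) * ((1 - q) / (1 - q^(j+2))))) sums rogersL q"
proof -
  define F where "F n = rogersL (q^(n+1) * (1 - q) / (1 - q^(n+2))) + rogersL ((1 - q) / (1 - q^(n+2)))" for n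
  have step: "rogersL ((q^(n+1) * (1 - q) / (1 - q^(n+2))) * ((1 - q) / (1 - q^(n+2)))) = F n - F (Suc n)" for n
  proof -
    define p where "p = q^(n+1)"
    have p0: "0 < p" using q by (simp add: p_def)
    have p1: "p < 1" unfolding p_def using power_Suc_less_one[OF q, of n] by simp
    have pq: "q^(n+2) = p * q" "q^(Suc n + 2) = p * q * q" by (simp_all add: p_def)
    define x where "x = p * (1 - q) / (1 - p * q)"
    define y where "y = (1 - q) / (1 - p * q)"
    have pqq: "p * q < q" using p1 q by simp
    have pq1: "p * q < 1" using pqq q by linarith
    have den: "0 < 1 - p * q" using pq1 by linarith
    have num: "1 - q < 1 - p * q" using pqq by linarith
    have "0 < y" unfolding y_def by (rule divide_pos_pos) (use q den in auto)
    moreover have "y < 1" unfolding y_def using divide_less_eq_1_pos[OF den] num by blast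
    ultimately have y01: "0 < y" "y < 1" by auto
    have xpy: "x = p * y" by (simp add: x_def y_def)
    have "p * y < 1 * 1" using y01 p0 p1 by (intro mult_strict_mono) auto
    then have x01: "0 < x" "x < 1" using y01 p0 xpy by auto
    have "rogersL x + rogersL y = rogersL (x * y) + rogersL (x * (1 - y) / (1 - x * y))
           + rogersL (y * (1 - x) / (1 - x * y))" by (rule five_term[OF x01 y01])
    also have "x * (1 - y) / (1 - x * y) = p * q * (1 - q) / (1 - p * q * q)"
      using step_alg(1)[OF q p0 p1] by (simp add: x_def y_def)
    also have "y * (1 - x) / (1 - x * y) = (1 - q) / (1 - p * q * q)"
      using step_alg(2)[OF q p0 p1] by (simp add: x_def y_def)
    finally have e: "rogersL (x * y) = (rogersL x + rogersL y) - (rogersL (p * q * (1 - q) / (1 - p * q * q))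
        + rogersL ((1 - q) / (1 - p * q * q)))" by simp
    have "F (Suc n) = rogersL (p * q * (1 - q) / (1 - p * q * q)) + rogersL ((1 - q) / (1 - p * q * q))"
      unfolding F_def pq(2) by (simp add: p_def mult.commute)
    moreover have "F n = rogersL x + rogersL y" unfolding F_def pq(1) x_def y_def p_def by simp
    ultimately show ?thesis using e unfolding x_def y_def pq(1) p_def by simp
  qed
  have bnd: "0 < q^(n+1) * (1 - q) / (1 - q^(n+2)) \<and> q^(n+1) * (1 - q) / (1 - q^(n+2)) < 1
     \<and> 0 < (1 - q) / (1 - q^(n+2)) \<and> (1 - q) / (1 - q^(n+2)) < 1" for n
  proof -
    define p where "p = q^(n+1)"
    have p0: "0 < p" using q by (simp add: p_def)
    have p1: "p < 1" unfolding p_def using power_Suc_less_one[OF q, of n] by simp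
    have pq: "q^(n+2) = p * q" by (simp add: p_def)
    define x where "x = p * (1 - q) / (1 - p * q)"
    define y where "y = (1 - q) / (1 - p * q)"
    have pqq: "p * q < q" using p1 q by simp
    have pq1: "p * q < 1" using pqq q by linarith
    have den: "0 < 1 - p * q" using pq1 by linarith
    have num: "1 - q < 1 - p * q" using pqq by linarith
    have "0 < y" unfolding y_def by (rule divide_pos_pos) (use q den in auto)
    moreover have "y < 1" unfolding y_def using divide_less_eq_1_pos[OF den] num by blast
    ultimately have y01: "0 < y" "y < 1" by auto
    have xpy: "x = p * y" by (simp add: x_def y_def)
    have "p * y < 1 * 1" using y01 p0 p1 by (intro mult_strict_mono) auto
    then have x01: "0 < x" "x < 1" using y01 p0 xpy by auto
    show ?thesis using x01 y01 unfolding x_def y_def pq p_def by simp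
  qed
  have lq: "(\<lambda>n. q^n) \<longlonglongrightarrow> 0" using q by (intro LIMSEQ_power_zero) auto
  have l1: "(\<lambda>n. q^(n+1)) \<longlonglongrightarrow> 0" using LIMSEQ_ignore_initial_segment[OF lq, of 1] .
  have l2: "(\<lambda>n. q^(n+2)) \<longlonglongrightarrow> 0" using LIMSEQ_ignore_initial_segment[OF lq, of 2] .
  have lx: "(\<lambda>n. q^(n+1) * (1 - q) / (1 - q^(n+2))) \<longlonglongrightarrow> 0 * (1 - q) / (1 - 0)"
    by (intro tendsto_intros l1 l2) simp
  have ly: "(\<lambda>n. (1 - q) / (1 - q^(n+2))) \<longlonglongrightarrow> (1 - q) / (1 - 0)"
    by (intro tendsto_intros l2) simp
  have rx: "(\<lambda>n. rogersL (q^(n+1) * (1 - q) / (1 - q^(n+2)))) \<longlonglongrightarrow> rogersL 0"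
    using continuous_on_tendsto_compose[OF rogersL_cont lx] bnd by (auto simp: less_imp_le)
  have ry: "(\<lambda>n. rogersL ((1 - q) / (1 - q^(n+2)))) \<longlonglongrightarrow> rogersL (1 - q)"
    using continuous_on_tendsto_compose[OF rogersL_cont ly] bnd q by (auto simp: less_imp_le)
  have lF: "F \<longlonglongrightarrow> rogersL 0 + rogersL (1 - q)"
    unfolding F_def[abs_def] by (intro tendsto_add rx ry)
  have "(\<lambda>n. F n - F (Suc n)) sums (F 0 - (rogersL 0 + rogersL (1 - q)))"
    by (rule telescope_sums'[OF lF])
  moreover have "F 0 = rogersL 1"
  proof -
    define z where "z = q * (1 - q) / (1 - q^2)"
    have d: "1 - q^2 > 0" using q power_Suc_less_one[OF q, of 1] by (simp add: numeral_2_eq_2)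
    have "1 - z = (1 - q) / (1 - q^2)" unfolding z_def using d by (simp add: field_simps power2_eq_square)
    moreover have "0 \<le> z" using q d by (simp add: z_def)
    moreover have "z \<le> 1"
    proof -
      have "q * (1 - q) \<le> 1 - q^2" using q by (simp add: power2_eq_square algebra_simps)
      then show ?thesis using d by (simp add: z_def)
    qed
    ultimately have "rogersL z + rogersL ((1 - q) / (1 - q^2)) = rogersL 1" using rogersL_refl[of z] by simp
    then show ?thesis by (simp add: F_def z_def power2_eq_square)
  qed
  moreover have "rogersL 1 - (rogersL 0 + rogersL (1 - q)) = rogersL q"
    using rogersL_refl[of q] q by simp
  ultimately show ?thesis using step by simp
qed



lemma sqrt_nat_irrat:
  assumes ns: "\<not> (\<exists>m::nat. n = m^2)"
  shows "sqrt (real n) \<notin> \<rat>"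
proof
  assume "sqrt (real n) \<in> \<rat>"
  then obtain p q :: nat where q0: "q \<noteq> 0" and e: "\<bar>sqrt (real n)\<bar> = real p / real q"
     and cop: "coprime p q" by (rule Rats_abs_nat_div_natE)
  have "sqrt (real n) * real q = real p" using e q0 by (simp add: field_simps)
  then have "(sqrt (real n) * real q)^2 = (real p)^2" by simp
  then have "real n * (real q)^2 = (real p)^2" by (simp add: power_mult_distrib)
  then have eq: "n * q^2 = p^2" by (metis of_nat_eq_iff of_nat_mult of_nat_power)
  then have "q^2 dvd p^2" by (metis dvd_triv_right)
  moreover have "coprime (q^2) (p^2)" using cop by (simp add: coprime_commute)
  ultimately have "is_unit (q^2)" using coprime_absorb_left by blast
  then have "q^2 = 1" by simp
  then have "q = 1" by simp
  then have "n = p^2" using eq by simp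
  then show False using ns by blast
qed

primrec PQ :: "rat \<Rightarrow> rat \<Rightarrow> nat \<Rightarrow> nat \<Rightarrow> rat \<times> rat" where
  "PQ a b n 0 = (1, 0)"
| "PQ a b n (Suc k) = (a * fst (PQ a b n k) + of_nat n * b * snd (PQ a b n k),
                        b * fst (PQ a b n k) + a * snd (PQ a b n k))"

lemma PQ_pow:
  "(of_rat a + of_rat b * sqrt (real n))^k
     = of_rat (fst (PQ a b n k)) + of_rat (snd (PQ a b n k)) * sqrt (real n)"
  "(of_rat a - of_rat b * sqrt (real n))^k
     = of_rat (fst (PQ a b n k)) - of_rat (snd (PQ a b n k)) * sqrt (real n)"
proof (induction k)
  case 0
  show "(of_rat a + of_rat b * sqrt (real n))^0
     = of_rat (fst (PQ a b n 0)) + of_rat (snd (PQ a b n 0)) * sqrt (real n)" by simp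
  show "(of_rat a - of_rat b * sqrt (real n))^0
     = of_rat (fst (PQ a b n 0)) - of_rat (snd (PQ a b n 0)) * sqrt (real n)" by simp
next
  case (Suc k)
  have ss: "sqrt (real n) * sqrt (real n) = real n" by simp
  show "(of_rat a + of_rat b * sqrt (real n))^Suc k
     = of_rat (fst (PQ a b n (Suc k))) + of_rat (snd (PQ a b n (Suc k))) * sqrt (real n)"
    unfolding power_Suc Suc.IH(1) by (simp add: of_rat_add of_rat_mult algebra_simps ss)
  show "(of_rat a - of_rat b * sqrt (real n))^Suc k
     = of_rat (fst (PQ a b n (Suc k))) - of_rat (snd (PQ a b n (Suc k))) * sqrt (real n)"
    unfolding power_Suc Suc.IH(2) by (simp add: of_rat_add of_rat_mult of_rat_diff algebra_simps ss)
qed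

lemma PQ_int:
  assumes "a \<in> \<int>" "b \<in> \<int>" "b \<noteq> 0"
  shows "fst (PQ a b n k) \<in> \<int> \<and> snd (PQ a b n k) / b \<in> \<int>"
proof (induction k)
  case 0 then show ?case by simp
next
  case (Suc k)
  then have P: "fst (PQ a b n k) \<in> \<int>" and Q: "snd (PQ a b n k) / b \<in> \<int>" by auto
  have e1: "fst (PQ a b n (Suc k)) = a * fst (PQ a b n k) + of_nat n * b * b * (snd (PQ a b n k) / b)"
    using assms(3) by simp
  have e2: "snd (PQ a b n (Suc k)) / b = fst (PQ a b n k) + a * (snd (PQ a b n k) / b)"
    using assms(3) by (simp add: field_simps)
  show ?case unfolding e1 e2 using P Q assms by (intro conjI Ints_add Ints_mult) auto
qed

lemma coeff_unique:
  assumes "r \<notin> \<rat>" "of_rat x1 + of_rat y1 * r = of_rat x2 + of_rat y2 * (r::real)"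
  shows "y1 = y2"
proof (rule ccontr)
  assume ne: "y1 \<noteq> y2"
  have "(of_rat y1 - of_rat y2) * r = of_rat x2 - of_rat x1" using assms(2) by (simp add: algebra_simps)
  then have "r = of_rat ((x2 - x1) / (y1 - y2))" using ne
    by (simp add: of_rat_diff of_rat_divide field_simps)
  then show False using assms(1) by (simp add: Rats_def)
qed

lemma ratio_alg:
  fixes u :: real assumes u: "u > 1"
  shows "1 / ((u^(j+2) - (1/u)^(j+2)) / (u - 1/u))^2
    = ((1/u^2)^(j+1) * (1 - 1/u^2) / (1 - (1/u^2)^(j+2))) * ((1 - 1/u^2) / (1 - (1/u^2)^(j+2)))"
proof -
  define w where "w = u^j"
  have w1: "w \<ge> 1" using u by (simp add: w_def one_le_power)
  have u0: "u \<noteq> 0" "w \<noteq> 0" using u w1 by auto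
  define M where "M = u^4 * w^2 - 1"
  define D where "D = u^2 - 1"
  have "u^2 > 1" using u by (simp add: one_less_power)
  then have D0: "D > 0" by (simp add: D_def)
  have "u^4 > 1" using u by (simp add: one_less_power)
  moreover have "w^2 \<ge> 1" using w1 by (simp add: one_le_power)
  then have "u^4 * 1 \<le> u^4 * w^2" using u by (intro mult_left_mono) auto
  ultimately have "u^4 * w^2 > 1" by simp
  then have M0: "M > 0" by (simp add: M_def)
  have p1: "u^(j+2) = u^2 * w" by (simp add: w_def power_add power2_eq_square)
  have p2: "(1/u)^(j+2) = 1 / (u^2 * w)" by (simp add: w_def power_add power_one_over power2_eq_square)
  have p3: "(1/u^2)^(j+1) = 1 / (u^2 * w^2)"
    by (simp add: w_def power_one_over flip: power_mult power_add) (simp add: algebra_simps)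
  have "(1/u^2)^(j+2) = (1/u^2)^(j+1) * (1/u^2)" by simp
  also have "\<dots> = 1 / (u^4 * w^2)" unfolding p3 using u0
    by (simp add: field_simps power2_eq_square numeral_eq_Suc)
  finally have p4: "(1/u^2)^(j+2) = 1 / (u^4 * w^2)" .
  have q1: "u^2 * w - 1 / (u^2 * w) = M / (u^2 * w)" using u0 by (simp add: M_def field_simps power2_eq_square numeral_eq_Suc)
  have q2: "u - 1/u = D / u" using u0 by (simp add: D_def field_simps power2_eq_square)
  have q3: "1 - 1/u^2 = D / u^2" using u0 by (simp add: D_def field_simps)
  have q4: "1 - 1 / (u^4 * w^2) = M / (u^4 * w^2)" using u0 by (simp add: M_def field_simps power2_eq_square numeral_eq_Suc)
  show ?thesis unfolding p1 p2 p3 p4 q1 q2 q3 q4 using u0 D0 M0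
    by (simp add: field_simps power2_eq_square numeral_eq_Suc)
qed

theorem theorem3:
  fixes n :: nat and a b :: rat and A B :: "nat \<Rightarrow> rat"
  assumes "n \<ge> 2"
    and "\<not> (\<exists>m::nat. n = m^2)"
    and "a > 0" and "b > 0"
    and "a^2 - of_nat n * b^2 = 1"
    and "\<And>k. k \<ge> 1 \<Longrightarrow>
           (of_rat a + of_rat b * sqrt (real n)) ^ k = of_rat (A k) + of_rat (B k) * sqrt (real n)"
  shows "((\<lambda>k. rogersL (1 / (of_rat (B (k+2) / b))^2))
           sums rogersL (1 / (of_rat a + of_rat b * sqrt (real n))^2))
         \<and> (a \<in> \<int> \<and> b \<in> \<int> \<longrightarrow> (\<forall>k\<ge>1. B k / b \<in> \<int>))"
proof -
  define r where "r = sqrt (real n)"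
  define u where "u = of_rat a + of_rat b * r"
  define v where "v = of_rat a - of_rat b * r"
  have irr: "r \<notin> \<rat>" unfolding r_def by (rule sqrt_nat_irrat[OF assms(2)])
  have r0: "r > 0" using assms(1) by (simp add: r_def)
  have rr: "r * r = real n" by (simp add: r_def)
  have ab: "real_of_rat a > 0" "real_of_rat b > 0" using assms(3,4) by auto
  have BQ: "B k = snd (PQ a b n k)" if "k \<ge> 1" for k
  proof (rule coeff_unique[OF irr])
    show "of_rat (A k) + of_rat (B k) * r = of_rat (fst (PQ a b n k)) + of_rat (snd (PQ a b n k)) * r"
      using assms(6)[OF that] PQ_pow(1)[of a b n k] by (simp add: r_def)
  qed
  have uv: "u * v = 1"
  proof -
    have "u * v = of_rat a ^ 2 - of_rat b ^ 2 * (r * r)" by (simp add: u_def v_def algebra_simps power2_eq_square)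
    also have "\<dots> = of_rat (a^2 - of_nat n * b^2)" by (simp add: rr of_rat_diff of_rat_mult of_rat_power algebra_simps)
    also have "\<dots> = 1" using assms(5) by simp
    finally show ?thesis .
  qed
  have u1: "u > 1"
  proof -
    have vu: "v < u" using ab r0 by (simp add: u_def v_def)
    have up: "u > 0" unfolding u_def using ab r0 by (intro add_pos_pos mult_pos_pos) auto
    show ?thesis
    proof (rule ccontr)
      assume "\<not> u > 1"
      then have "u \<le> 1" by simp
      then have "u * u \<le> 1 * 1" using up by (intro mult_mono) auto
      moreover have "u * v < u * u" using vu up by simp
      ultimately show False using uv by simp
    qed
  qed
  have v1: "v = 1 / u" using uv u1 by (simp add: field_simps)
  have QR: "real_of_rat (snd (PQ a b n k)) * (2 * r) = u^k - v^k" for k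
    using PQ_pow(1)[of a b n k] PQ_pow(2)[of a b n k] by (simp add: u_def v_def r_def)
  have b1: "snd (PQ a b n 1) = b" by simp
  have ratio: "real_of_rat (B k / b) = (u^k - v^k) / (u - v)" if "k \<ge> 1" for k
  proof -
    have "real_of_rat (B k / b) = real_of_rat (snd (PQ a b n k)) / real_of_rat (snd (PQ a b n 1))"
      using BQ[OF that] b1 by (simp add: of_rat_divide)
    also have "\<dots> = (real_of_rat (snd (PQ a b n k)) * (2 * r)) / (real_of_rat (snd (PQ a b n 1)) * (2 * r))"
      using r0 by simp
    also have "\<dots> = (u^k - v^k) / (u - v)" unfolding QR by simp
    finally show ?thesis .
  qed
  have q01: "0 < 1 / u^2" "1 / u^2 < 1" using u1 by (auto simp: one_less_power)
  have "(\<lambda>j. rogersL (((1/u^2)^(j+1) * (1 - 1/u^2) / (1 - (1/u^2)^(j+2))) * ((1 - 1/u^2) / (1 - (1/u^2)^(j+2)))))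
      sums rogersL (1/u^2)" by (rule tele[OF q01])
  moreover have "rogersL (1 / (of_rat (B (j+2) / b))^2)
      = rogersL (((1/u^2)^(j+1) * (1 - 1/u^2) / (1 - (1/u^2)^(j+2))) * ((1 - 1/u^2) / (1 - (1/u^2)^(j+2))))" for j
  proof -
    have rj: "real_of_rat (B (j+2) / b) = (u^(j+2) - v^(j+2)) / (u - v)" by (rule ratio) simp
    show ?thesis unfolding rj v1 ratio_alg[OF u1] ..
  qed
  ultimately have part1: "(\<lambda>k. rogersL (1 / (of_rat (B (k+2) / b))^2)) sums rogersL (1 / (of_rat a + of_rat b * sqrt (real n))^2)"
    by (simp add: u_def r_def)
  have part2: "\<forall>k\<ge>1. B k / b \<in> \<int>" if "a \<in> \<int>" "b \<in> \<int>"
    using PQ_int[OF that, of n] assms(4) BQ by auto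
  show ?thesis using part1 part2 by blast
qed


end
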